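(* Let $U>0$, $\mu\in\mathbb{R}$, $T\ge0$ and let $(\gamma,\alpha,\rho_0)$ be a minimizer of $\mathcal{F}$ over $\mathcal{D}$. Then $\alpha\equiv0$ if and only if $\rho_0=0$. If $\rho_0>0$, then $\alpha<0$ almost everywhere and $\|\alpha\|_{L^1(\mathbb{T}^3)}<\rho_0$.
   Context: Let $\mathbb{T}^3=[-\pi,\pi]^3$ with periodic identification and normalized Haar measure $dp$. Let $\varepsilon(p)=4\sum_{k=1}^3\sin^2(p_k/2)$. $\mathcal{D}=\{(\gamma,\alpha,\rho_0): \gamma\in L^1(\mathbb{T}^3),\ \gamma\ge0,\ \alpha^2\le\gamma(1+\gamma)\text{ a.e.},\ \rho_0\ge0\}$. With $\beta=\sqrt{(\tfrac12+\gamma)^2-\alpha^2}$, $S(\gamma,\alpha)=\int\big[(\beta+\tfrac12)\ln(\beta+\tfrac12)-(\beta-\tfrac12)\ln(\beta-\tfrac12)\big]dp$, and $\mathcal{F}(\gamma,\alpha,\rho_0)=\int(\varepsilon-\mu)\gamma\,dp-\mu\rho_0-TS(\gamma,\alpha)+\frac U2(\int\alpha)^2+U(\int\gamma)^2+U\rho_0\int\alpha+2U\rho_0\int\gamma+\frac U2\rho_0^2$ (integrals over $\mathbb{T}^3$; entropy term absent at $T=0$). A minimizer is a point of $\mathcal{D}$ attaining $\inf_{\mathcal{D}}\mathcal{F}$. *)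

theory Defs
  imports "HOL-Analysis.Analysis"
begin

text \<open>The torus [-pi,pi]^3 (periodic identification is immaterial for
integrals, the boundary is a null set), with normalized Haar measure =
normalized Lebesgue measure on the fundamental cube.\<close>

definition T3box :: "(real^3) set" where
  "T3box = cbox (\<chi> i. - pi) (\<chi> i. pi)"

definition torus :: "(real^3) measure" where
  "torus = uniform_measure lborel T3box"

definition tint :: "(real^3 \<Rightarrow> real) \<Rightarrow> real" where
  "tint f = (\<integral>p. f p \<partial>torus)"

definition disp :: "real^3 \<Rightarrow> real" where
  "disp p = 4 * (\<Sum>k\<in>UNIV. (sin (p $ k / 2))^2)"

definition betaf :: "real \<Rightarrow> real \<Rightarrow> real" where
  "betaf g a = sqrt ((1/2 + g)^2 - a^2)"

definition entropy_density :: "real \<Rightarrow> real" where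
  "entropy_density b = (b + 1/2) * ln (b + 1/2) - (b - 1/2) * ln (b - 1/2)"

definition entropy :: "(real^3 \<Rightarrow> real) \<Rightarrow> (real^3 \<Rightarrow> real) \<Rightarrow> real" where
  "entropy \<gamma> \<alpha> = tint (\<lambda>p. entropy_density (betaf (\<gamma> p) (\<alpha> p)))"

definition admissible :: "(real^3 \<Rightarrow> real) \<Rightarrow> (real^3 \<Rightarrow> real) \<Rightarrow> real \<Rightarrow> bool" where
  "admissible \<gamma> \<alpha> \<rho>0 \<longleftrightarrow>
     integrable torus \<gamma> \<and> \<alpha> \<in> borel_measurable torus \<and>
     (AE p in torus. \<gamma> p \<ge> 0) \<and>
     (AE p in torus. (\<alpha> p)^2 \<le> \<gamma> p * (1 + \<gamma> p)) \<and> \<rho>0 \<ge> 0"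

definition Ffun :: "real \<Rightarrow> real \<Rightarrow> real \<Rightarrow> (real^3 \<Rightarrow> real) \<Rightarrow> (real^3 \<Rightarrow> real) \<Rightarrow> real \<Rightarrow> real" where
  "Ffun U \<mu> T \<gamma> \<alpha> \<rho>0 =
     tint (\<lambda>p. (disp p - \<mu>) * \<gamma> p) - \<mu> * \<rho>0 - T * entropy \<gamma> \<alpha>
     + U / 2 * (tint \<alpha>)^2 + U * (tint \<gamma>)^2 + U * \<rho>0 * tint \<alpha>
     + 2 * U * \<rho>0 * tint \<gamma> + U / 2 * \<rho>0^2"

definition is_minimizer :: "real \<Rightarrow> real \<Rightarrow> real \<Rightarrow> (real^3 \<Rightarrow> real) \<Rightarrow> (real^3 \<Rightarrow> real) \<Rightarrow> real \<Rightarrow> bool" where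
  "is_minimizer U \<mu> T \<gamma> \<alpha> \<rho>0 \<longleftrightarrow>
     admissible \<gamma> \<alpha> \<rho>0 \<and>
     (\<forall>\<gamma>' \<alpha>' \<rho>'. admissible \<gamma>' \<alpha>' \<rho>' \<longrightarrow> Ffun U \<mu> T \<gamma> \<alpha> \<rho>0 \<le> Ffun U \<mu> T \<gamma>' \<alpha>' \<rho>')"

end

theory Submission
  imports Defs "HOL-Probability.Probability_Measure"
begin

lemma ent_meas: "entropy_density \<in> borel_measurable borel"
  unfolding entropy_density_def
  by (intro borel_measurable_diff borel_measurable_times borel_measurable_add borel_measurable_ln
      borel_measurable_const measurable_ident_sets refl)

lemma ent_comp_meas:
  fixes \<gamma> \<alpha> :: "real^3 \<Rightarrow> real" and M :: "(real^3) measure"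
  assumes [measurable]: "\<gamma> \<in> borel_measurable M" "\<alpha> \<in> borel_measurable M"
  shows "(\<lambda>p. entropy_density (betaf (\<gamma> p) (\<alpha> p))) \<in> borel_measurable M"
proof -
  have "(\<lambda>p. betaf (\<gamma> p) (\<alpha> p)) \<in> borel_measurable M"
    unfolding betaf_def by measurable
  then show ?thesis by (rule measurable_compose[OF _ ent_meas])
qed

lemma sets_torus[simp, measurable_cong]: "sets torus = sets borel"
  by (simp add: torus_def)

lemma space_torus[simp]: "space torus = UNIV"
  by (simp add: torus_def)

lemma vec_const_inner: "(b::real^3) \<in> Basis \<Longrightarrow> (\<chi> i. c) \<bullet> b = c"
  by (auto simp: Basis_vec_def inner_axis)

lemma prob_torus: "prob_space torus"
proof -
  have le: "\<forall>b\<in>Basis. (\<chi> i. - pi) \<bullet> b \<le> (\<chi> i. pi) \<bullet> (b::real^3)"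
    by (simp add: vec_const_inner)
  have eq: "(\<Prod>b\<in>(Basis::(real^3) set). ((\<chi> i. pi) - (\<chi> i. - pi)) \<bullet> b) = (\<Prod>b\<in>(Basis::(real^3) set). 2 * pi)"
    by (intro prod.cong refl) (simp add: inner_diff_left vec_const_inner)
  have pos: "(\<Prod>b\<in>(Basis::(real^3) set). 2 * pi) > 0"
    by (intro prod_pos) simp
  have "emeasure lborel T3box = ennreal (\<Prod>b\<in>(Basis::(real^3) set). 2 * pi)"
    unfolding T3box_def emeasure_lborel_cbox_eq using le eq by simp
  then show ?thesis unfolding torus_def using pos
    by (intro prob_space_uniform_measure) auto
qed

interpretation tor: prob_space torus by (rule prob_torus)

definition hh :: "real \<Rightarrow> real" where
  "hh x = (x+1) * ln (x+1) - x * ln x"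

lemma ent_hh: "entropy_density b = hh (b - 1/2)"
  unfolding entropy_density_def hh_def by (simp add: algebra_simps)

lemma hh_split: assumes "x > 0" shows "hh x = ln (x+1) + x * ln ((x+1)/x)"
proof -
  have "ln ((x+1)/x) = ln (x+1) - ln x" using assms by (simp add: ln_div)
  then show ?thesis unfolding hh_def by (simp add: right_diff_distrib distrib_right)
qed

lemma hh_nonneg: assumes "x \<ge> 0" shows "0 \<le> hh x"
proof (cases "x = 0")
  case True then show ?thesis by (simp add: hh_def)
next
  case False
  then have x: "x > 0" using assms by simp
  have "ln ((x+1)/x) \<ge> 0" using x by (simp add: ln_ge_zero)
  then show ?thesis using x hh_split[OF x] by simp
qed

lemma hh_upper: assumes "x \<ge> 0" shows "hh x \<le> x + 1"
proof (cases "x = 0")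
  case True then show ?thesis by (simp add: hh_def)
next
  case False
  then have x: "x > 0" using assms by simp
  have 1: "ln ((x+1)/x) \<le> (x+1)/x - 1" using x by (intro ln_le_minus_one) simp
  have "(x+1)/x - 1 = 1/x" using x by (simp add: field_simps)
  with 1 have "x * ln ((x+1)/x) \<le> x * (1/x)" using x by (intro mult_left_mono) auto
  then have 2: "x * ln ((x+1)/x) \<le> 1" using x by simp
  have 3: "ln (x+1) \<le> x" using ln_le_minus_one[of "x+1"] x by simp
  show ?thesis using 2 3 hh_split[OF x] by simp
qed

lemma hh_deriv: assumes zp: "z > 0" shows "DERIV hh z :> ((ln (z+1) + 1) - (ln z + 1))"
proof -
  have d1: "((\<lambda>w. (w+1) * ln (w+1)) has_real_derivative (ln (z+1) + 1)) (at z)"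
    using zp by (auto intro!: derivative_eq_intros)
  have d2: "((\<lambda>w. w * ln w) has_real_derivative (ln z + 1)) (at z)"
    using zp by (auto intro!: derivative_eq_intros)
  show ?thesis unfolding hh_def by (rule DERIV_diff[OF d1 d2])
qed

lemma hh_mono: assumes "0 \<le> x" "x \<le> y" shows "hh x \<le> hh y"
proof (cases "x = 0")
  case True then show ?thesis using hh_nonneg[of y] assms by (simp add: hh_def)
next
  case False
  then have x: "x > 0" using assms by simp
  show ?thesis
  proof (rule DERIV_nonneg_imp_increasing_open[OF assms(2)])
    fix z assume z: "x < z" "z < y"
    then have zp: "z > 0" using x by simp
    have "ln z \<le> ln (z+1)" using zp by simp
    then show "\<exists>d. DERIV hh z :> d \<and> d \<ge> 0" using hh_deriv[OF zp]
      by (intro exI[of _ "((ln (z+1) + 1) - (ln z + 1))"]) simp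
  next
    have "\<forall>z\<in>{x..y}. isCont hh z"
    proof
      fix z assume "z \<in> {x..y}"
      then have "z > 0" using x by simp
      then show "isCont hh z" by (rule DERIV_isCont[OF hh_deriv])
    qed
    then show "continuous_on {x..y} hh" by (rule continuous_at_imp_continuous_on)
  qed
qed

lemma ent_mono: assumes "1/2 \<le> b" "b \<le> b'" shows "entropy_density b \<le> entropy_density b'"
  unfolding ent_hh using assms by (intro hh_mono) auto

lemma ent_bounds: assumes "1/2 \<le> b" shows "0 \<le> entropy_density b" "entropy_density b \<le> b + 1/2"
  unfolding ent_hh using assms hh_nonneg[of "b-1/2"] hh_upper[of "b-1/2"] by auto

lemma betaf_ge: assumes "a^2 \<le> g * (1+g)" shows "1/2 \<le> betaf g a"
proof -
  have "(1/2)^2 \<le> (1/2+g)^2 - a^2" using assms by (simp add: power2_eq_square algebra_simps)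
  then have "sqrt ((1/2)^2) \<le> betaf g a" unfolding betaf_def by (rule real_sqrt_le_mono)
  then show ?thesis by simp
qed

lemma betaf_le: assumes "g \<ge> 0" shows "betaf g a \<le> 1/2 + g"
proof -
  have "(1/2+g)^2 - a^2 \<le> (1/2+g)^2" by simp
  then have "betaf g a \<le> sqrt ((1/2+g)^2)" unfolding betaf_def by (rule real_sqrt_le_mono)
  then show ?thesis using assms by simp
qed

lemma betaf_mono: assumes "(1/2+g)^2 - a^2 \<le> (1/2+g')^2 - a'^2" shows "betaf g a \<le> betaf g' a'"
  unfolding betaf_def using assms by (rule real_sqrt_le_mono)


lemma adm_beta: fixes g a g' a' :: real assumes "(1/2+g)^2 - a^2 \<le> (1/2+g')^2 - a'^2" "a^2 \<le> g*(1+g)"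
  shows "a'^2 \<le> g'*(1+g')"
  using assms by (simp add: power2_eq_square algebra_simps)

lemma abs_le_gamma: assumes "(0::real) \<le> g" "a^2 \<le> g*(1+g)" shows "\<bar>a\<bar> \<le> g + 1/2"
proof -
  have "\<bar>a\<bar>^2 \<le> (g+1/2)^2" using assms by (simp add: power2_eq_square algebra_simps)
  then show ?thesis by (rule power2_le_imp_le) (use assms in simp)
qed

lemma disp_bounds: "0 \<le> disp p" "disp p \<le> 12"
proof -
  have "(\<Sum>k\<in>UNIV. (sin (p $ k / 2))^2) \<le> (\<Sum>k\<in>(UNIV::3 set). 1)"
    by (intro sum_mono) (simp add: abs_square_le_1)
  then show "disp p \<le> 12" unfolding disp_def by simp
  show "0 \<le> disp p" unfolding disp_def by (simp add: sum_nonneg)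
qed

lemma disp_cont: "continuous_on UNIV disp"
proof -
  have c: "continuous_on UNIV (\<lambda>p::real^3. p $ k)" for k
    by (rule linear_continuous_on[OF bounded_linear_vec_nth])
  have "continuous_on UNIV (\<lambda>p::real^3. (sin (p $ k / 2))^2)" for k
    by (intro continuous_on_power continuous_on_compose2[OF continuous_on_sin] continuous_on_divide c continuous_on_const) auto
  then show ?thesis unfolding disp_def
    by (intro continuous_on_mult continuous_on_const continuous_on_sum) auto
qed

lemma disp_meas[measurable]: "disp \<in> borel_measurable borel"
  by (rule borel_measurable_continuous_onI[OF disp_cont])

lemma adm_D:
  assumes "admissible \<gamma> \<alpha> \<rho>"
  shows "integrable torus \<gamma>" "\<alpha> \<in> borel_measurable torus" "AE p in torus. \<gamma> p \<ge> 0"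
    "AE p in torus. (\<alpha> p)^2 \<le> \<gamma> p * (1 + \<gamma> p)" "\<rho> \<ge> 0"
  using assms unfolding admissible_def by auto

lemma int_bound:
  fixes f g :: "real^3 \<Rightarrow> real"
  assumes "integrable torus f" "g \<in> borel_measurable torus" "AE p in torus. \<bar>g p\<bar> \<le> f p"
  shows "integrable torus g"
  using assms by (intro Bochner_Integration.integrable_bound[OF assms(1) assms(2)]) auto

lemma int_const[simp]: "integrable torus (\<lambda>p. (c::real))"
  by (rule tor.integrable_const)

lemma tint_const[simp]: "tint (\<lambda>p. c) = c"
  unfolding tint_def using tor.prob_space by simp

lemma adm_int_alpha: assumes "admissible \<gamma> \<alpha> \<rho>" shows "integrable torus \<alpha>"
proof (rule int_bound[of "\<lambda>p. \<gamma> p + 1/2"])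
  show "integrable torus (\<lambda>p. \<gamma> p + 1/2)" using adm_D[OF assms] by simp
  show "\<alpha> \<in> borel_measurable torus" using adm_D[OF assms] by simp
  show "AE p in torus. \<bar>\<alpha> p\<bar> \<le> \<gamma> p + 1/2"
    using adm_D(3,4)[OF assms] by eventually_elim (rule abs_le_gamma)
qed

lemma int_disp_mult: assumes "integrable torus f" shows "integrable torus (\<lambda>p. (disp p - \<mu>) * f p)"
proof (rule int_bound[of "\<lambda>p. (12 + \<bar>\<mu>\<bar>) * \<bar>f p\<bar>"])
  show "integrable torus (\<lambda>p. (12 + \<bar>\<mu>\<bar>) * \<bar>f p\<bar>)" using assms by simp
  have [measurable]: "f \<in> borel_measurable borel" using borel_measurable_integrable[OF assms] by simp
  show "(\<lambda>p. (disp p - \<mu>) * f p) \<in> borel_measurable torus" by simp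
  show "AE p in torus. \<bar>(disp p - \<mu>) * f p\<bar> \<le> (12 + \<bar>\<mu>\<bar>) * \<bar>f p\<bar>"
  proof (intro AE_I2)
    fix p
    have "\<bar>disp p - \<mu>\<bar> \<le> 12 + \<bar>\<mu>\<bar>" using disp_bounds[of p] by linarith
    then show "\<bar>(disp p - \<mu>) * f p\<bar> \<le> (12 + \<bar>\<mu>\<bar>) * \<bar>f p\<bar>"
      by (simp add: abs_mult mult_right_mono)
  qed
qed

lemma adm_int_ent: assumes "admissible \<gamma> \<alpha> \<rho>"
  shows "integrable torus (\<lambda>p. entropy_density (betaf (\<gamma> p) (\<alpha> p)))"
proof (rule int_bound[of "\<lambda>p. \<gamma> p + 1"])
  show "integrable torus (\<lambda>p. \<gamma> p + 1)" using adm_D[OF assms] by simp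
  show "(\<lambda>p. entropy_density (betaf (\<gamma> p) (\<alpha> p))) \<in> borel_measurable torus"
    by (rule ent_comp_meas) (use adm_D(2)[OF assms] borel_measurable_integrable[OF adm_D(1)[OF assms]] in auto)
  show "AE p in torus. \<bar>entropy_density (betaf (\<gamma> p) (\<alpha> p))\<bar> \<le> \<gamma> p + 1"
    using adm_D(3,4)[OF assms]
  proof eventually_elim
    case (elim p)
    have b1: "1/2 \<le> betaf (\<gamma> p) (\<alpha> p)" using elim(2) by (rule betaf_ge)
    have b2: "betaf (\<gamma> p) (\<alpha> p) \<le> 1/2 + \<gamma> p" using elim(1) by (rule betaf_le)
    show ?case using ent_bounds[OF b1] b2 by simp
  qed
qed

lemma Ffun_T: "Ffun U \<mu> T \<gamma> \<alpha> \<rho> = Ffun U \<mu> 0 \<gamma> \<alpha> \<rho> - T * entropy \<gamma> \<alpha>"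
  unfolding Ffun_def by simp

lemma key:
  assumes min: "is_minimizer U \<mu> T \<gamma> \<alpha> \<rho>" and T: "T \<ge> 0"
    and adm': "admissible \<gamma>' \<alpha>' \<rho>'"
    and le: "AE p in torus. (1/2 + \<gamma> p)^2 - (\<alpha> p)^2 \<le> (1/2 + \<gamma>' p)^2 - (\<alpha>' p)^2"
  shows "Ffun U \<mu> 0 \<gamma> \<alpha> \<rho> \<le> Ffun U \<mu> 0 \<gamma>' \<alpha>' \<rho>'"
proof -
  have adm: "admissible \<gamma> \<alpha> \<rho>" using min unfolding is_minimizer_def by simp
  have "entropy \<gamma> \<alpha> \<le> entropy \<gamma>' \<alpha>'"
    unfolding entropy_def tint_def
  proof (rule integral_mono_AE[OF adm_int_ent[OF adm] adm_int_ent[OF adm']])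
    show "AE p in torus. entropy_density (betaf (\<gamma> p) (\<alpha> p)) \<le> entropy_density (betaf (\<gamma>' p) (\<alpha>' p))"
      using adm_D(4)[OF adm] le
    proof eventually_elim
      case (elim p)
      show ?case using betaf_ge[OF elim(1)] betaf_mono[OF elim(2)] by (rule ent_mono)
    qed
  qed
  then have "T * entropy \<gamma> \<alpha> \<le> T * entropy \<gamma>' \<alpha>'" using T by (rule mult_left_mono)
  moreover have "Ffun U \<mu> T \<gamma> \<alpha> \<rho> \<le> Ffun U \<mu> T \<gamma>' \<alpha>' \<rho>'"
    using min adm' unfolding is_minimizer_def by blast
  ultimately show ?thesis unfolding Ffun_T[of U \<mu> T] by simp
qed


lemma Ffun0: "Ffun U \<mu> 0 \<gamma> \<alpha> \<rho> = tint (\<lambda>p. (disp p - \<mu>) * \<gamma> p) - \<mu> * \<rho>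
     + U / 2 * (tint \<alpha>)^2 + U * (tint \<gamma>)^2 + U * \<rho> * tint \<alpha>
     + 2 * U * \<rho> * tint \<gamma> + U / 2 * \<rho>^2"
  unfolding Ffun_def by simp

lemma min_adm: "is_minimizer U \<mu> T \<gamma> \<alpha> \<rho> \<Longrightarrow> admissible \<gamma> \<alpha> \<rho>"
  unfolding is_minimizer_def by simp

lemma adm_meas_alpha: "admissible \<gamma> \<alpha> \<rho> \<Longrightarrow> \<alpha> \<in> borel_measurable torus"
  by (rule adm_D(2))

lemma tint_scale: "tint (\<lambda>p. c * f p) = c * tint f"
  unfolding tint_def by simp

lemma tint_add: "integrable torus f \<Longrightarrow> integrable torus g \<Longrightarrow> tint (\<lambda>p. f p + g p) = tint f + tint g"
  unfolding tint_def by simp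

lemma tint_diff: "integrable torus f \<Longrightarrow> integrable torus g \<Longrightarrow> tint (\<lambda>p. f p - g p) = tint f - tint g"
  unfolding tint_def by simp

lemma V1:
  assumes min: "is_minimizer U \<mu> T \<gamma> \<alpha> \<rho>" and T: "T \<ge> 0" and U: "U > 0"
    and t: "0 \<le> t" "t \<le> 1"
  shows "(tint \<alpha> + \<rho>)^2 \<le> (\<rho> - t * tint (\<lambda>p. \<bar>\<alpha> p\<bar>))^2"
proof -
  have adm: "admissible \<gamma> \<alpha> \<rho>" by (rule min_adm[OF min])
  define \<alpha>' where "\<alpha>' = (\<lambda>p. - (t * \<bar>\<alpha> p\<bar>))"
  have t2: "t^2 \<le> 1" using t by (simp add: power_le_one)
  have pt: "t^2 * (\<alpha> p)^2 \<le> (\<alpha> p)^2" for p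
    using mult_right_mono[OF t2, of "(\<alpha> p)^2"] by simp
  have sq: "(\<alpha>' p)^2 = t^2 * (\<alpha> p)^2" for p
    unfolding \<alpha>'_def by (simp add: power_mult_distrib)
  have adm': "admissible \<gamma> \<alpha>' \<rho>"
    unfolding admissible_def
  proof (intro conjI)
    show "\<alpha>' \<in> borel_measurable torus" unfolding \<alpha>'_def
      by (intro borel_measurable_uminus borel_measurable_times borel_measurable_const
          borel_measurable_abs adm_meas_alpha[OF adm])
    show "AE p in torus. (\<alpha>' p)^2 \<le> \<gamma> p * (1 + \<gamma> p)"
      using adm_D(4)[OF adm] by eventually_elim (use sq pt in \<open>metis order_trans\<close>)
  qed (use adm_D[OF adm] in auto)
  have le: "AE p in torus. (1/2 + \<gamma> p)^2 - (\<alpha> p)^2 \<le> (1/2 + \<gamma> p)^2 - (\<alpha>' p)^2"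
    by (intro AE_I2) (simp add: sq pt)
  have F: "Ffun U \<mu> 0 \<gamma> \<alpha> \<rho> \<le> Ffun U \<mu> 0 \<gamma> \<alpha>' \<rho>"
    by (rule key[OF min T adm' le])
  have ta: "tint \<alpha>' = - (t * tint (\<lambda>p. \<bar>\<alpha> p\<bar>))"
    unfolding \<alpha>'_def tint_def by simp
  define a where "a = tint \<alpha>"
  define A where "A = tint (\<lambda>p. \<bar>\<alpha> p\<bar>)"
  have "U / 2 * a^2 + U * \<rho> * a \<le> U / 2 * (t*A)^2 - U * \<rho> * (t*A)"
    using F unfolding Ffun0 ta a_def[symmetric] A_def[symmetric] by (simp add: power2_eq_square)
  then have "U * ((a + \<rho>)^2 - (\<rho> - t*A)^2) \<le> 0"
    by (simp add: power2_eq_square algebra_simps)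
  then have "(a + \<rho>)^2 - (\<rho> - t*A)^2 \<le> 0" using U by (simp add: mult_le_0_iff)
  then show ?thesis unfolding a_def A_def by simp
qed


lemma bineq3:
  fixes \<gamma> a t :: real assumes "\<gamma> \<ge> 0" "0 \<le> t" "t \<le> 1"
  shows "(1/2+\<gamma>)^2 - a^2 \<le> (1/2 + (\<gamma> - t * (a^2/(1+2*\<gamma>))))^2 - ((1-t)*a)^2"
proof -
  define g where "g = a^2/(1+2*\<gamma>)"
  have hg: "g*(1+2*\<gamma>) = a^2" using assms by (simp add: g_def)
  have id: "(1/2 + (\<gamma> - t*g))^2 - ((1-t)*a)^2 - ((1/2+\<gamma>)^2 - a^2)
      = t^2*g^2 + t*(1-t)*a^2 + t*(a^2 - g*(1+2*\<gamma>))"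
    by (simp add: power2_eq_square algebra_simps)
  have "0 \<le> t^2*g^2 + t*(1-t)*a^2" using assms by simp
  then show ?thesis using id hg unfolding g_def[symmetric] by simp
qed

lemma g_bounds:
  fixes \<gamma> a :: real assumes "\<gamma> \<ge> 0" "a^2 \<le> \<gamma> * (1 + \<gamma>)"
  shows "0 \<le> a^2/(1+2*\<gamma>)" "a^2/(1+2*\<gamma>) \<le> \<gamma>"
proof -
  show "0 \<le> a^2/(1+2*\<gamma>)" using assms by simp
  have "\<gamma> * (1+\<gamma>) \<le> \<gamma> * (1+2*\<gamma>)" using assms by (intro mult_left_mono) auto
  then have "a^2 \<le> \<gamma> * (1+2*\<gamma>)" using assms by linarith
  then show "a^2/(1+2*\<gamma>) \<le> \<gamma>" using assms by (simp add: divide_le_eq)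
qed

lemma V3:
  assumes min: "is_minimizer U \<mu> T \<gamma> \<alpha> \<rho>" and T: "T \<ge> 0" and U: "U > 0"
    and c0: "tint \<alpha> + \<rho> = 0"
  shows "AE p in torus. \<alpha> p = 0"
proof (rule ccontr)
  assume nz: "\<not> (AE p in torus. \<alpha> p = 0)"
  have adm: "admissible \<gamma> \<alpha> \<rho>" by (rule min_adm[OF min])
  note ad = adm_D[OF adm]
  have m\<gamma>: "\<gamma> \<in> borel_measurable torus" using borel_measurable_integrable[OF ad(1)] .
  have m\<alpha>: "\<alpha> \<in> borel_measurable torus" using ad(2) .
  define g where "g = (\<lambda>p. (\<alpha> p)^2 / (1 + 2 * \<gamma> p))"
  have mg: "g \<in> borel_measurable torus" unfolding g_def
    by (intro borel_measurable_divide borel_measurable_power borel_measurable_add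
        borel_measurable_times borel_measurable_const m\<gamma> m\<alpha>)
  have gb: "AE p in torus. 0 \<le> g p \<and> g p \<le> \<gamma> p"
    using ad(3,4) by eventually_elim (auto simp: g_def intro: g_bounds)
  have ig: "integrable torus g"
    by (rule int_bound[OF ad(1) mg]) (use gb in \<open>eventually_elim, simp\<close>)
  define G where "G = tint g"
  have G0: "G \<ge> 0" unfolding G_def tint_def
    by (rule integral_nonneg_AE) (use gb in \<open>eventually_elim, simp\<close>)
  have Gp: "G > 0"
  proof (rule ccontr)
    assume "\<not> G > 0"
    then have "G = 0" using G0 by simp
    then have "AE p in torus. g p = 0"
      unfolding G_def tint_def
      using integral_nonneg_eq_0_iff_AE[OF ig] gb by (auto elim: AE_mp)
    then have "AE p in torus. \<alpha> p = 0" using ad(3)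
      by eventually_elim (simp add: g_def)
    then show False using nz by simp
  qed
  have \<rho>0: "\<rho> \<ge> 0" using ad(5) .
  define t where "t = G / (G + \<rho>)"
  have tpos: "t > 0" unfolding t_def using Gp \<rho>0 by simp
  have tle: "t \<le> 1" unfolding t_def using Gp \<rho>0 by simp
  have tG: "t * \<rho> = G - t * G" unfolding t_def using Gp \<rho>0 by (simp add: field_simps)
  define \<gamma>' where "\<gamma>' = (\<lambda>p. \<gamma> p - t * g p)"
  define \<alpha>' where "\<alpha>' = (\<lambda>p. (1 - t) * \<alpha> p)"
  define \<rho>' where "\<rho>' = \<rho> + t * G"
  have le: "AE p in torus. (1/2 + \<gamma> p)^2 - (\<alpha> p)^2 \<le> (1/2 + \<gamma>' p)^2 - (\<alpha>' p)^2"
    using ad(3) by eventually_elim (unfold \<gamma>'_def \<alpha>'_def g_def, rule bineq3, use tpos tle in auto)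
  have ig': "integrable torus \<gamma>'" unfolding \<gamma>'_def using ad(1) ig by simp
  have adm': "admissible \<gamma>' \<alpha>' \<rho>'"
    unfolding admissible_def
  proof (intro conjI)
    show "integrable torus \<gamma>'" by (rule ig')
    show "\<alpha>' \<in> borel_measurable torus" unfolding \<alpha>'_def
      by (intro borel_measurable_times borel_measurable_const m\<alpha>)
    show "AE p in torus. 0 \<le> \<gamma>' p" using gb
    proof eventually_elim
      case (elim p)
      have "t * g p \<le> g p" using elim tle mult_right_mono[OF tle, of "g p"] by simp
      then show ?case unfolding \<gamma>'_def using elim by simp
    qed
    show "AE p in torus. (\<alpha>' p)^2 \<le> \<gamma>' p * (1 + \<gamma>' p)" using le ad(4)
      by eventually_elim (rule adm_beta)
    show "0 \<le> \<rho>'" unfolding \<rho>'_def using \<rho>0 tpos G0 by simp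
  qed
  have F: "Ffun U \<mu> 0 \<gamma> \<alpha> \<rho> \<le> Ffun U \<mu> 0 \<gamma>' \<alpha>' \<rho>'"
    by (rule key[OF min T adm' le])
  define X where "X = tint (\<lambda>p. (disp p - \<mu>) * g p)"
  have X: "- \<mu> * G \<le> X"
  proof -
    have "tint (\<lambda>p. - \<mu> * g p) \<le> X" unfolding X_def tint_def
    proof (rule integral_mono_AE)
      show "integrable torus (\<lambda>p. - \<mu> * g p)" using ig by simp
      show "integrable torus (\<lambda>p. (disp p - \<mu>) * g p)" by (rule int_disp_mult[OF ig])
      show "AE p in torus. - \<mu> * g p \<le> (disp p - \<mu>) * g p" using gb
        by eventually_elim (use disp_bounds in \<open>simp add: algebra_simps\<close>)
    qed
    then show ?thesis unfolding G_def tint_scale by simp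
  qed
  have t1: "tint (\<lambda>p. (disp p - \<mu>) * \<gamma>' p) = tint (\<lambda>p. (disp p - \<mu>) * \<gamma> p) - t * X"
  proof -
    have "tint (\<lambda>p. (disp p - \<mu>) * \<gamma>' p) = tint (\<lambda>p. (disp p - \<mu>) * \<gamma> p - t * ((disp p - \<mu>) * g p))"
      unfolding \<gamma>'_def by (simp add: algebra_simps)
    also have "\<dots> = tint (\<lambda>p. (disp p - \<mu>) * \<gamma> p) - tint (\<lambda>p. t * ((disp p - \<mu>) * g p))"
      by (rule tint_diff) (use int_disp_mult[OF ad(1)] int_disp_mult[OF ig] in simp_all)
    finally show ?thesis unfolding tint_scale X_def .
  qed
  have t2: "tint \<gamma>' = tint \<gamma> - t * G"
    unfolding \<gamma>'_def G_def using tint_diff[OF ad(1), of "\<lambda>p. t * g p"] ig by (simp add: tint_scale)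
  have t3: "tint \<alpha>' = (1 - t) * tint \<alpha>" unfolding \<alpha>'_def by (rule tint_scale)
  define L where "L = tint (\<lambda>p. (disp p - \<mu>) * \<gamma> p)"
  define n where "n = tint \<gamma>"
  have a: "tint \<alpha> = - \<rho>" using c0 by simp
  have ineq: "L - \<mu> * \<rho> + U / 2 * \<rho>^2 + U * n^2 - U * \<rho> * \<rho> + 2 * U * \<rho> * n + U / 2 * \<rho>^2
     \<le> L - t * X - \<mu> * (\<rho> + t * G) + U / 2 * ((1 - t) * \<rho>)^2 + U * (n - t * G)^2
        - U * (\<rho> + t * G) * ((1 - t) * \<rho>) + 2 * U * (\<rho> + t * G) * (n - t * G) + U / 2 * (\<rho> + t * G)^2"
    using F unfolding Ffun0 t1 t2 t3 a L_def[symmetric] n_def[symmetric] \<rho>'_def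
    by (simp add: power2_eq_square)
  define s where "s = t * \<rho>"
  have id: "(L - t * X - \<mu> * (\<rho> + t * G) + U / 2 * ((1 - t) * \<rho>)^2 + U * (n - t * G)^2
        - U * (\<rho> + t * G) * ((1 - t) * \<rho>) + 2 * U * (\<rho> + t * G) * (n - t * G) + U / 2 * (\<rho> + t * G)^2)
      - (L - \<mu> * \<rho> + U / 2 * \<rho>^2 + U * n^2 - U * \<rho> * \<rho> + 2 * U * \<rho> * n + U / 2 * \<rho>^2)
      = - t * (X + \<mu> * G) + (U/2 * s^2 - U/2 * t^2 * G^2 - 2 * U * G * s + U * t * G * s)"
    unfolding s_def by (simp add: power2_eq_square algebra_simps)
  have s: "s = G - t * G" using tG unfolding s_def .
  have id2: "U/2 * s^2 - U/2 * t^2 * G^2 - 2 * U * G * s + U * t * G * s = - (U * G^2 * ((t - 1)^2 + 1/2))"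
    unfolding s by (simp add: power2_eq_square algebra_simps)
  have "0 \<le> (t-1)^2" by simp
  then have "0 < (t-1)^2 + 1/2" by linarith
  then have neg: "U * G^2 * ((t - 1)^2 + 1/2) > 0" using U Gp by (intro mult_pos_pos) auto
  have "0 \<le> t * (X + \<mu> * G)" using tpos X by simp
  then show False using ineq id id2 neg by linarith
qed


lemma bineq4:
  fixes g a e :: real assumes "g \<ge> 0" "a \<le> 0" "i = 0 \<or> (i = 1 \<and> a = 0)"
  shows "(1/2+g)^2 - a^2 \<le> (1/2 + (g + e^2 * i))^2 - (a - e * i)^2"
  using assms(3)
proof
  assume "i = 0" then show ?thesis by simp
next
  assume h: "i = 1 \<and> a = 0"
  have "0 \<le> 2 * g * e^2 + (e^2)^2" using assms(1) by simp
  moreover have "(1/2 + (g + e^2))^2 - e^2 - (1/2+g)^2 = 2 * g * e^2 + (e^2)^2"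
    by (simp add: power2_eq_square algebra_simps)
  ultimately show ?thesis using h by simp
qed

lemma V4:
  assumes min: "is_minimizer U \<mu> T \<gamma> \<alpha> \<rho>" and T: "T \<ge> 0" and U: "U > 0"
    and cpos: "tint \<alpha> + \<rho> > 0" and neg: "AE p in torus. \<alpha> p \<le> 0"
  shows "AE p in torus. \<alpha> p < 0"
proof (rule ccontr)
  assume nAE: "\<not> (AE p in torus. \<alpha> p < 0)"
  have adm: "admissible \<gamma> \<alpha> \<rho>" by (rule min_adm[OF min])
  note ad = adm_D[OF adm]
  have m\<alpha>: "\<alpha> \<in> borel_measurable torus" using ad(2) .
  define E where "E = {p. 0 \<le> \<alpha> p}"
  have "{w \<in> space torus. 0 \<le> \<alpha> w} \<in> sets torus"
    using m\<alpha> unfolding borel_measurable_iff_ge by blast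
  then have E: "E \<in> sets torus" unfolding E_def by simp
  have Efin: "emeasure torus E < \<infinity>" using tor.emeasure_finite[of E] by (simp add: less_top[symmetric])
  define ind where "ind = (\<lambda>p. indicator E p :: real)"
  have iind: "integrable torus ind" unfolding ind_def using E Efin by simp
  define m where "m = measure torus E"
  have tind: "tint ind = m" unfolding ind_def tint_def m_def by simp
  have mle: "m \<le> 1" unfolding m_def by (rule tor.prob_le_1)
  have mpos: "m > 0"
  proof -
    have "{x \<in> space torus. \<not> \<alpha> x < 0} = E" unfolding E_def by auto
    then have ae: "(AE x in torus. \<alpha> x < 0) = (emeasure torus E = 0)"
      by (rule AE_iff_measurable[OF E])
    have "emeasure torus E \<noteq> 0" using nAE unfolding ae .
    then have "measure torus E \<noteq> 0" unfolding tor.emeasure_eq_measure by simp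
    then show ?thesis unfolding m_def using measure_nonneg[of torus E] by linarith
  qed
  have \<rho>0: "\<rho> \<ge> 0" using ad(5) .
  define n where "n = tint \<gamma>"
  have n0: "n \<ge> 0" unfolding n_def tint_def by (rule integral_nonneg_AE[OF ad(3)])
  define c where "c = tint \<alpha> + \<rho>"
  define K0 where "K0 = 12 + \<bar>\<mu>\<bar>"
  define K where "K = K0 + U/2 + 2*U*n + U + 2*U*\<rho>"
  have Kpos: "K > 0" unfolding K_def K0_def using U n0 \<rho>0 by (simp add: add_pos_nonneg)
  define e where "e = min 1 (U * c / (2 * K))"
  have cp: "c > 0" using cpos unfolding c_def .
  have epos: "e > 0" unfolding e_def using U cp Kpos by simp
  have ele: "e \<le> 1" unfolding e_def by simp
  have eK: "e * K \<le> U * c / 2"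
  proof -
    have "e \<le> U * c / (2 * K)" unfolding e_def by simp
    then have "e * K \<le> U * c / (2 * K) * K" using Kpos by (intro mult_right_mono) auto
    then show ?thesis using Kpos by simp
  qed
  define \<gamma>' where "\<gamma>' = (\<lambda>p. \<gamma> p + e^2 * ind p)"
  define \<alpha>' where "\<alpha>' = (\<lambda>p. \<alpha> p - e * ind p)"
  have le: "AE p in torus. (1/2 + \<gamma> p)^2 - (\<alpha> p)^2 \<le> (1/2 + \<gamma>' p)^2 - (\<alpha>' p)^2"
    using ad(3) neg
  proof eventually_elim
    case (elim p)
    have "ind p = 0 \<or> (ind p = 1 \<and> \<alpha> p = 0)" using elim unfolding ind_def E_def by (auto simp: indicator_def)
    then show ?case unfolding \<gamma>'_def \<alpha>'_def using elim by (intro bineq4) auto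
  qed
  have adm': "admissible \<gamma>' \<alpha>' \<rho>"
    unfolding admissible_def
  proof (intro conjI)
    show "integrable torus \<gamma>'" unfolding \<gamma>'_def using ad(1) iind by simp
    show "\<alpha>' \<in> borel_measurable torus" unfolding \<alpha>'_def
      using m\<alpha> borel_measurable_integrable[OF iind] by simp
    show "AE p in torus. 0 \<le> \<gamma>' p" using ad(3)
      by eventually_elim (simp add: \<gamma>'_def ind_def)
    show "AE p in torus. (\<alpha>' p)^2 \<le> \<gamma>' p * (1 + \<gamma>' p)" using le ad(4)
      by eventually_elim (rule adm_beta)
  qed (rule \<rho>0)
  have F: "Ffun U \<mu> 0 \<gamma> \<alpha> \<rho> \<le> Ffun U \<mu> 0 \<gamma>' \<alpha>' \<rho>"
    by (rule key[OF min T adm' le])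
  define X where "X = tint (\<lambda>p. (disp p - \<mu>) * ind p)"
  have X: "X \<le> K0 * m"
  proof -
    have "X \<le> tint (\<lambda>p. K0 * ind p)" unfolding X_def tint_def
    proof (rule integral_mono)
      show "integrable torus (\<lambda>p. (disp p - \<mu>) * ind p)" by (rule int_disp_mult[OF iind])
      show "integrable torus (\<lambda>p. K0 * ind p)" using iind by simp
      fix p
      have "disp p - \<mu> \<le> K0" unfolding K0_def using disp_bounds(2)[of p] by linarith
      then show "(disp p - \<mu>) * ind p \<le> K0 * ind p" unfolding ind_def
        by (simp add: indicator_def)
    qed
    then show ?thesis unfolding tint_scale tind .
  qed
  have t1: "tint (\<lambda>p. (disp p - \<mu>) * \<gamma>' p) = tint (\<lambda>p. (disp p - \<mu>) * \<gamma> p) + e^2 * X"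
  proof -
    have "tint (\<lambda>p. (disp p - \<mu>) * \<gamma>' p) = tint (\<lambda>p. (disp p - \<mu>) * \<gamma> p + e^2 * ((disp p - \<mu>) * ind p))"
      unfolding \<gamma>'_def by (simp add: algebra_simps)
    also have "\<dots> = tint (\<lambda>p. (disp p - \<mu>) * \<gamma> p) + tint (\<lambda>p. e^2 * ((disp p - \<mu>) * ind p))"
      by (rule tint_add) (use int_disp_mult[OF ad(1)] int_disp_mult[OF iind] in simp_all)
    finally show ?thesis unfolding tint_scale X_def .
  qed
  have t2: "tint \<gamma>' = n + e^2 * m"
    unfolding \<gamma>'_def n_def using tint_add[OF ad(1), of "\<lambda>p. e^2 * ind p"] iind
    by (simp add: tint_scale tind)
  have t3: "tint \<alpha>' = tint \<alpha> - e * m"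
    unfolding \<alpha>'_def using tint_diff[OF adm_int_alpha[OF adm], of "\<lambda>p. e * ind p"] iind
    by (simp add: tint_scale tind)
  define L where "L = tint (\<lambda>p. (disp p - \<mu>) * \<gamma> p)"
  define a where "a = tint \<alpha>"
  have ineq: "L - \<mu> * \<rho> + U / 2 * a^2 + U * n^2 + U * \<rho> * a + 2 * U * \<rho> * n + U / 2 * \<rho>^2
     \<le> L + e^2 * X - \<mu> * \<rho> + U / 2 * (a - e * m)^2 + U * (n + e^2 * m)^2 + U * \<rho> * (a - e * m)
        + 2 * U * \<rho> * (n + e^2 * m) + U / 2 * \<rho>^2"
    using F unfolding Ffun0 t1 t2 t3 L_def[symmetric] n_def[symmetric] a_def[symmetric] .
  have id: "(L + e^2 * X - \<mu> * \<rho> + U / 2 * (a - e * m)^2 + U * (n + e^2 * m)^2 + U * \<rho> * (a - e * m)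
        + 2 * U * \<rho> * (n + e^2 * m) + U / 2 * \<rho>^2)
      - (L - \<mu> * \<rho> + U / 2 * a^2 + U * n^2 + U * \<rho> * a + 2 * U * \<rho> * n + U / 2 * \<rho>^2)
      = e^2 * X - U * e * m * (a + \<rho>) + U/2 * e^2 * m^2 + 2 * U * n * e^2 * m + U * (e^2)^2 * m^2
        + 2 * U * \<rho> * e^2 * m"
    by (simp add: power2_eq_square algebra_simps)
  have e2: "e^2 \<le> 1" using epos ele by (simp add: power_le_one)
  have m2: "m^2 \<le> m" using mpos mle by (simp add: power2_eq_square mult_left_le)
  have b1: "e^2 * X \<le> e^2 * (K0 * m)" using X by (intro mult_left_mono) auto
  have b2: "U/2 * e^2 * m^2 \<le> U/2 * e^2 * m" using m2 U by (intro mult_left_mono) auto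
  have "(e^2)^2 * m^2 \<le> e^2 * m"
  proof -
    have "(e^2)^2 \<le> e^2" using e2 by (simp add: power2_eq_square mult_left_le)
    then show ?thesis using m2 by (intro mult_mono) auto
  qed
  then have b3: "U * (e^2)^2 * m^2 \<le> U * (e^2 * m)" using U
    by (simp add: mult.assoc mult_left_mono)
  have sumK: "e^2 * (K0 * m) + U/2 * e^2 * m + 2 * U * n * e^2 * m + U * (e^2 * m) + 2 * U * \<rho> * e^2 * m
      = e * m * (e * K)" unfolding K_def by (simp add: power2_eq_square algebra_simps)
  have "e * m * (e * K) \<le> e * m * (U * c / 2)" using eK epos mpos by (intro mult_left_mono) auto
  moreover have "U * e * m * (a + \<rho>) = e * m * (U * c)" unfolding c_def a_def by simp
  moreover have "e * m * (U * c) > 0" using epos mpos U cp by simp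
  ultimately show False using ineq id b1 b2 b3 sumK by linarith
qed


theorem proposition4p1:
  fixes U \<mu> T \<rho>0 :: real and \<gamma> \<alpha> :: "real^3 \<Rightarrow> real"
  assumes "U > 0" and "T \<ge> 0"
    and "is_minimizer U \<mu> T \<gamma> \<alpha> \<rho>0"
  shows "((AE p in torus. \<alpha> p = 0) \<longleftrightarrow> \<rho>0 = 0)
    \<and> (\<rho>0 > 0 \<longrightarrow> (AE p in torus. \<alpha> p < 0) \<and> tint (\<lambda>p. \<bar>\<alpha> p\<bar>) < \<rho>0)"
proof -
  note U = assms(1) and T = assms(2) and min = assms(3)
  have adm: "admissible \<gamma> \<alpha> \<rho>0" by (rule min_adm[OF min])
  note ad = adm_D[OF adm]
  have ia: "integrable torus \<alpha>" by (rule adm_int_alpha[OF adm])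
  have iA: "integrable torus (\<lambda>p. \<bar>\<alpha> p\<bar>)" using ia by simp
  define a where "a = tint \<alpha>"
  define A where "A = tint (\<lambda>p. \<bar>\<alpha> p\<bar>)"
  define c where "c = a + \<rho>0"
  have v1: "c^2 \<le> (\<rho>0 - t * A)^2" if "0 \<le> t" "t \<le> 1" for t
    using V1[OF min T U that] unfolding c_def a_def A_def .
  have A0: "A \<ge> 0" unfolding A_def tint_def by simp
  have aA: "- A \<le> a" unfolding A_def a_def tint_def
  proof -
    have "integral\<^sup>L torus (\<lambda>p. - \<bar>\<alpha> p\<bar>) \<le> integral\<^sup>L torus \<alpha>"
      by (rule integral_mono) (use ia iA in auto)
    then show "- integral\<^sup>L torus (\<lambda>p. \<bar>\<alpha> p\<bar>) \<le> integral\<^sup>L torus \<alpha>" by simp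
  qed
  have \<rho>0: "\<rho>0 \<ge> 0" using ad(5) .
  have CN: "c > 0 \<and> a = - A \<and> A < \<rho>0" if cn: "c \<noteq> 0"
  proof -
    have AL: "A < \<rho>0"
    proof (rule ccontr)
      assume "\<not> A < \<rho>0"
      then have Ag: "A \<ge> \<rho>0" by simp
      show False
      proof (cases "A = 0")
        case True
        then have "\<rho>0 = 0" using Ag \<rho>0 by simp
        then have "c^2 \<le> 0" using v1[of 0] by simp
        then show False using cn by simp
      next
        case False
        then have Ap: "A > 0" using A0 by simp
        have "c^2 \<le> (\<rho>0 - \<rho>0 / A * A)^2" using Ap Ag \<rho>0 by (intro v1) auto
        then have "c^2 \<le> 0" using Ap by simp
        then show False using cn by simp
      qed
    qed
    have c1: "c^2 \<le> (\<rho>0 - A)^2" using v1[of 1] by simp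
    have cge: "\<rho>0 - A \<le> c" unfolding c_def using aA by simp
    have "c \<le> \<rho>0 - A" by (rule power2_le_imp_le[OF c1]) (use AL in simp)
    then have "c = \<rho>0 - A" using cge by simp
    then show ?thesis using AL unfolding c_def by simp
  qed
  have c0: "c = 0 \<Longrightarrow> AE p in torus. \<alpha> p = 0"
    by (rule V3[OF min T U]) (simp add: c_def a_def)
  have part2: "\<rho>0 > 0 \<Longrightarrow> (AE p in torus. \<alpha> p < 0) \<and> A < \<rho>0"
  proof -
    assume rp: "\<rho>0 > 0"
    have cn: "c \<noteq> 0"
    proof
      assume "c = 0"
      then have "AE p in torus. \<alpha> p = 0" by (rule c0)
      then have "a = 0" unfolding a_def tint_def by (rule integral_eq_zero_AE)
      then show False using \<open>c = 0\<close> rp unfolding c_def by simp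
    qed
    from CN[OF cn] have cp: "c > 0" and aeq: "a = - A" and AL: "A < \<rho>0" by auto
    have "tint (\<lambda>p. \<bar>\<alpha> p\<bar> + \<alpha> p) = 0"
      using tint_add[OF iA ia] aeq unfolding a_def A_def by simp
    then have "AE p in torus. \<bar>\<alpha> p\<bar> + \<alpha> p = 0"
      unfolding tint_def using integral_nonneg_eq_0_iff_AE[of torus "\<lambda>p. \<bar>\<alpha> p\<bar> + \<alpha> p"] iA ia
      by simp
    then have neg: "AE p in torus. \<alpha> p \<le> 0" by eventually_elim simp
    have "AE p in torus. \<alpha> p < 0"
      by (rule V4[OF min T U _ neg]) (use cp in \<open>simp add: c_def a_def\<close>)
    then show ?thesis using AL by simp
  qed
  have part1: "(AE p in torus. \<alpha> p = 0) \<longleftrightarrow> \<rho>0 = 0"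
  proof
    assume ae0: "AE p in torus. \<alpha> p = 0"
    show "\<rho>0 = 0"
    proof (rule ccontr)
      assume "\<rho>0 \<noteq> 0"
      then have "\<rho>0 > 0" using \<rho>0 by simp
      then have "AE p in torus. \<alpha> p < 0" using part2 by simp
      with ae0 have "AE p in torus. False" by eventually_elim simp
      then show False using tor.AE_False by simp
    qed
  next
    assume r: "\<rho>0 = 0"
    have "c = 0"
    proof (rule ccontr)
      assume "c \<noteq> 0"
      then have "A < \<rho>0" using CN by simp
      then show False using A0 r by simp
    qed
    then show "AE p in torus. \<alpha> p = 0" by (rule c0)
  qed
  show ?thesis using part1 part2 unfolding A_def by simp
qed

end
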